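(* Let $(G,\alpha,\beta)$ be a minimal counterexample, where a counterexample is a triple such that $G$ is a planar graph of girth at least $6$ and $\alpha,\beta$ are $5$-colourings of $G$ such that there is no recolouring sequence from $\alpha$ to $\beta$ in which every vertex is recoloured at most $6143$ times, and minimal means $|V(G)|$ is minimum among all such counterexamples. Then $G$ does not contain a $2$-degenerate $1$-island $H$ with $|V(H)|\leq 12$.
   Context: A $5$-colouring is a proper colouring with colours $\{1,\dots,5\}$; a recolouring sequence is a sequence of proper colourings in which consecutive ones differ on exactly one vertex. Given a graph $G$ and an induced subgraph $H$ of $G$, $H$ is a $2$-degenerate $1$-island if (i) each vertex of $H$ has at most one neighbour in $G-H$, and (ii) there is an ordering $v_1,\dots,v_{|V(H)|}$ of $V(H)$ such that for each $i\in\{2,\dots,|V(H)|\}$, the vertex $v_i$ has at most two neighbours in the graph $G-H+\{v_1,\dots,v_{i-1}\}$ (the subgraph of $G$ induced by $V(G-H)\cup\{v_1,\dots,v_{i-1}\}$). *)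

theory Defs
  imports "HOL-Analysis.Analysis"
begin

definition graph :: "'a set \<Rightarrow> 'a set set \<Rightarrow> bool" where
  "graph V E \<longleftrightarrow> finite V \<and> (\<forall>e\<in>E. \<exists>u v. e = {u, v} \<and> u \<in> V \<and> v \<in> V \<and> u \<noteq> v)"

definition adj :: "'a set set \<Rightarrow> 'a \<Rightarrow> 'a \<Rightarrow> bool" where
  "adj E u v \<longleftrightarrow> {u, v} \<in> E"

definition planar :: "'a set \<Rightarrow> 'a set set \<Rightarrow> bool" where
  "planar V E \<longleftrightarrow>
    (\<exists>(p :: 'a \<Rightarrow> complex) (\<gamma> :: 'a set \<Rightarrow> real \<Rightarrow> complex).
       inj_on p V \<and>
       (\<forall>e\<in>E. \<exists>u v. e = {u, v} \<and> arc (\<gamma> e) \<and> pathstart (\<gamma> e) = p u \<and>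
                    pathfinish (\<gamma> e) = p v \<and> path_image (\<gamma> e) \<inter> p ` V = {p u, p v}) \<and>
       (\<forall>e\<in>E. \<forall>e'\<in>E. e \<noteq> e' \<longrightarrow> path_image (\<gamma> e) \<inter> path_image (\<gamma> e') \<subseteq> p ` (e \<inter> e')))"

definition is_cycle :: "'a set \<Rightarrow> 'a set set \<Rightarrow> 'a list \<Rightarrow> bool" where
  "is_cycle V E cs \<longleftrightarrow> length cs \<ge> 3 \<and> distinct cs \<and> set cs \<subseteq> V \<and>
     (\<forall>i < length cs. adj E (cs ! i) (cs ! ((i + 1) mod length cs)))"

definition girth_at_least :: "nat \<Rightarrow> 'a set \<Rightarrow> 'a set set \<Rightarrow> bool" where
  "girth_at_least g V E \<longleftrightarrow> (\<forall>cs. is_cycle V E cs \<longrightarrow> length cs \<ge> g)"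

definition colouring5 :: "'a set \<Rightarrow> 'a set set \<Rightarrow> ('a \<Rightarrow> nat) \<Rightarrow> bool" where
  "colouring5 V E c \<longleftrightarrow> (\<forall>v\<in>V. c v \<in> {1..5}) \<and> (\<forall>u\<in>V. \<forall>v\<in>V. adj E u v \<longrightarrow> c u \<noteq> c v)"

definition agree_on :: "'a set \<Rightarrow> ('a \<Rightarrow> nat) \<Rightarrow> ('a \<Rightarrow> nat) \<Rightarrow> bool" where
  "agree_on V c d \<longleftrightarrow> (\<forall>v\<in>V. c v = d v)"

definition recolouring_seq :: "'a set \<Rightarrow> 'a set set \<Rightarrow> ('a \<Rightarrow> nat) list \<Rightarrow> ('a \<Rightarrow> nat) \<Rightarrow> ('a \<Rightarrow> nat) \<Rightarrow> bool" where
  "recolouring_seq V E cs a b \<longleftrightarrow> cs \<noteq> [] \<and> agree_on V (hd cs) a \<and> agree_on V (last cs) b \<and>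
     (\<forall>c\<in>set cs. colouring5 V E c) \<and>
     (\<forall>i. i + 1 < length cs \<longrightarrow> card {v\<in>V. (cs ! i) v \<noteq> (cs ! (i + 1)) v} = 1)"

definition times_recoloured :: "('a \<Rightarrow> nat) list \<Rightarrow> 'a \<Rightarrow> nat" where
  "times_recoloured cs v = card {i. i + 1 < length cs \<and> (cs ! i) v \<noteq> (cs ! (i + 1)) v}"

definition counterexample :: "'a set \<Rightarrow> 'a set set \<Rightarrow> ('a \<Rightarrow> nat) \<Rightarrow> ('a \<Rightarrow> nat) \<Rightarrow> bool" where
  "counterexample V E a b \<longleftrightarrow> graph V E \<and> planar V E \<and> girth_at_least 6 V E \<and>
     colouring5 V E a \<and> colouring5 V E b \<and>
     \<not> (\<exists>cs. recolouring_seq V E cs a b \<and> (\<forall>v\<in>V. times_recoloured cs v \<le> 6143))"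

definition two_degenerate_one_island :: "'a set \<Rightarrow> 'a set set \<Rightarrow> 'a set \<Rightarrow> bool" where
  "two_degenerate_one_island V E S \<longleftrightarrow> S \<subseteq> V \<and>
     (\<forall>v\<in>S. card {u \<in> V - S. adj E v u} \<le> 1) \<and>
     (\<exists>vs. distinct vs \<and> set vs = S \<and>
        (\<forall>i. 1 \<le> i \<and> i < length vs \<longrightarrow>
              card {u \<in> (V - S) \<union> set (take i vs). adj E (vs ! i) u} \<le> 2))"

end

theory Submission
  imports Defs
begin


fun vseq :: "'a set \<Rightarrow> 'a set set \<Rightarrow> ('a \<Rightarrow> nat) list \<Rightarrow> bool" where
  "vseq W E [] = False"
| "vseq W E [c] = colouring5 W E c"
| "vseq W E (c # c' # cs) = (colouring5 W E c \<and> card {v\<in>W. c v \<noteq> c' v} = 1 \<and> vseq W E (c' # cs))"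

lemma vseq_iff: "vseq W E cs \<longleftrightarrow> cs \<noteq> [] \<and> (\<forall>c\<in>set cs. colouring5 W E c) \<and>
   (\<forall>i. i + 1 < length cs \<longrightarrow> card {v\<in>W. (cs ! i) v \<noteq> (cs ! (i + 1)) v} = 1)"
proof (induction W E cs rule: vseq.induct)
  case (3 W E c c' cs)
  have "(\<forall>i. i + 1 < length (c # c' # cs) \<longrightarrow> card {v\<in>W. ((c # c' # cs) ! i) v \<noteq> ((c # c' # cs) ! (i + 1)) v} = 1)
     \<longleftrightarrow> card {v\<in>W. c v \<noteq> c' v} = 1 \<and> (\<forall>i. i + 1 < length (c' # cs) \<longrightarrow> card {v\<in>W. ((c' # cs) ! i) v \<noteq> ((c' # cs) ! (i + 1)) v} = 1)"
    (is "?L \<longleftrightarrow> ?R")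
  proof
    assume L: ?L
    show ?R
    proof
      show "card {v\<in>W. c v \<noteq> c' v} = 1" using spec[OF L, of 0] by simp
      show "\<forall>i. i + 1 < length (c' # cs) \<longrightarrow> card {v\<in>W. ((c' # cs) ! i) v \<noteq> ((c' # cs) ! (i + 1)) v} = 1"
      proof (intro allI impI)
        fix i assume "i + 1 < length (c' # cs)"
        then show "card {v\<in>W. ((c' # cs) ! i) v \<noteq> ((c' # cs) ! (i + 1)) v} = 1"
          using spec[OF L, of "Suc i"] by simp
      qed
    qed
  next
    assume R: ?R
    show ?L
    proof (intro allI impI)
      fix i assume i: "i + 1 < length (c # c' # cs)"
      show "card {v\<in>W. ((c # c' # cs) ! i) v \<noteq> ((c # c' # cs) ! (i + 1)) v} = 1"
      proof (cases i)
        case 0 then show ?thesis using R by simp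
      next
        case (Suc j) then show ?thesis using R i by simp
      qed
    qed
  qed
  then show ?case using "3.IH" by auto
qed auto

lemma rs_iff: "recolouring_seq W E cs a b \<longleftrightarrow> vseq W E cs \<and> agree_on W (hd cs) a \<and> agree_on W (last cs) b"
  unfolding recolouring_seq_def vseq_iff by auto

lemma tr_single: "times_recoloured [c] v = 0"
  by (simp add: times_recoloured_def)

lemma tr_cons: assumes "l \<noteq> []"
  shows "times_recoloured (a # l) v = (if a v \<noteq> hd l v then 1 else 0) + times_recoloured l v"
proof -
  let ?I = "{i. i + 1 < length l \<and> (l ! i) v \<noteq> (l ! (i + 1)) v}"
  have eq: "{i. i + 1 < length (a # l) \<and> ((a # l) ! i) v \<noteq> ((a # l) ! (i + 1)) v}
     = (if a v \<noteq> hd l v then {0} else {}) \<union> Suc ` ?I"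
  proof (intro set_eqI iffI)
    fix i assume "i \<in> {i. i + 1 < length (a # l) \<and> ((a # l) ! i) v \<noteq> ((a # l) ! (i + 1)) v}"
    then show "i \<in> (if a v \<noteq> hd l v then {0} else {}) \<union> Suc ` ?I"
      using assms by (cases i) (auto simp: hd_conv_nth)
  next
    fix i assume "i \<in> (if a v \<noteq> hd l v then {0} else {}) \<union> Suc ` ?I"
    then show "i \<in> {i. i + 1 < length (a # l) \<and> ((a # l) ! i) v \<noteq> ((a # l) ! (i + 1)) v}"
      using assms by (auto simp: hd_conv_nth split: if_splits)
  qed
  have fin: "finite ?I" by (rule finite_subset[of _ "{..<length l}"]) auto
  have "0 \<notin> Suc ` ?I" by auto
  then show ?thesis unfolding times_recoloured_def eq using fin
    by (simp add: card_image)
qed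

lemma adj_sym: "adj E u v = adj E v u"
  by (simp add: adj_def insert_commute)

definition Dmove :: "'a set \<Rightarrow> ('a \<Rightarrow> nat) \<Rightarrow> ('a \<Rightarrow> nat) \<Rightarrow> bool" where
  "Dmove D c c' \<longleftrightarrow> (\<exists>u\<in>D. c u \<noteq> c' u)"

fun dm :: "'a set \<Rightarrow> ('a \<Rightarrow> nat) list \<Rightarrow> nat" where
  "dm D [] = 0"
| "dm D [c] = 0"
| "dm D (c # c' # cs) = (if Dmove D c c' then 1 else 0) + dm D (c' # cs)"

fun used :: "'a set \<Rightarrow> nat \<Rightarrow> ('a \<Rightarrow> nat) list \<Rightarrow> nat set" where
  "used D k [] = {}"
| "used D k [c] = c ` D"
| "used D k (c # c' # cs) = c ` D \<union>
     (if Dmove D c c' then (if k = 0 then {} else used D (k - 1) (c' # cs)) else used D k (c' # cs))"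

definition xb :: "nat \<Rightarrow> nat \<Rightarrow> nat \<Rightarrow> nat" where
  "xb g T k = (if T \<le> k then 1 else (T - k + g - 1) div g + 1)"

lemma xb_shift: "xb g T k = xb g (Suc T) (Suc k)"
  by (simp add: xb_def)

lemma xb_step: "1 \<le> g \<Longrightarrow> xb g T (g - 1) + 1 \<le> xb g (Suc T) 0"
proof -
  assume g: "1 \<le> g"
  show ?thesis
  proof (cases "T \<le> g - 1")
    case True
    then have "T < g" using g by simp
    then have "(T + g) div g = 1" using g by simp
    then show ?thesis using True g by (simp add: xb_def)
  next
    case False
    then have "T - (g - 1) + g - 1 = T" using g by simp
    moreover have "(T + g) div g = T div g + 1" using g by simp
    ultimately show ?thesis using False g by (simp add: xb_def)
  qed
qed

lemma xb_mono: "T \<le> T' \<Longrightarrow> xb g T 0 \<le> xb g T' 0"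
  by (auto simp: xb_def intro: div_le_mono)

lemma dm_le: "finite D \<Longrightarrow> dm D cs \<le> (\<Sum>u\<in>D. times_recoloured cs u)"
proof (induction cs rule: induct_list012)
  case (3 c c' zs)
  have eq: "(\<Sum>u\<in>D. times_recoloured (c # c' # zs) u) =
     (\<Sum>u\<in>D. (if c u \<noteq> c' u then 1 else 0)) + (\<Sum>u\<in>D. times_recoloured (c' # zs) u)"
    by (simp add: tr_cons sum.distrib)
  have "(if Dmove D c c' then 1 else 0) \<le> (\<Sum>u\<in>D. (if c u \<noteq> c' u then 1 else 0::nat))"
  proof (cases "Dmove D c c'")
    case True
    then obtain u where "u \<in> D" "c u \<noteq> c' u" by (auto simp: Dmove_def)
    then have "(if c u \<noteq> c' u then 1 else 0::nat) \<le> (\<Sum>u\<in>D. (if c u \<noteq> c' u then 1 else 0))"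
      using "3.prems" by (intro member_le_sum) auto
    then show ?thesis using True \<open>c u \<noteq> c' u\<close> by simp
  qed simp
  then show ?case using eq "3.IH" "3.prems" by simp
qed auto



context
  fixes W :: "'a set" and E :: "'a set set" and x :: 'a and D :: "'a set" and g :: nat and bx :: nat
  assumes xW: "x \<notin> W" and DW: "D \<subseteq> W" and finD: "finite D"
    and Dadj: "\<And>u. u \<in> W \<Longrightarrow> adj E x u \<Longrightarrow> u \<in> D"
    and Dadj2: "\<And>u. u \<in> D \<Longrightarrow> adj E x u"
    and noloop: "\<not> adj E x x"
    and g1: "1 \<le> g" and gD: "card D + g \<le> 4"
    and bx: "bx \<in> {1..5}"
begin

lemma col_ext:
  assumes c: "colouring5 W E c" and z: "z \<in> {1..5}" "z \<notin> c ` D"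
  shows "colouring5 (insert x W) E (c(x:=z))"
  unfolding colouring5_def
proof (intro conjI ballI impI)
  fix v assume "v \<in> insert x W"
  then show "(c(x := z)) v \<in> {1..5}" using c z unfolding colouring5_def by auto
next
  fix u v assume u: "u \<in> insert x W" and v: "v \<in> insert x W" and a: "adj E u v"
  show "(c(x := z)) u \<noteq> (c(x := z)) v"
  proof (cases "u = x")
    case True
    then have "v \<noteq> x" using a noloop by auto
    then have "v \<in> D" using v a True Dadj by auto
    then show ?thesis using True \<open>v \<noteq> x\<close> z by auto
  next
    case False
    then have uW: "u \<in> W" using u by auto
    show ?thesis
    proof (cases "v = x")
      case True
      then have "u \<in> D" using uW a Dadj adj_sym by metis
      then show ?thesis using True False z by auto
    next
      case False
      then show ?thesis using \<open>u \<noteq> x\<close> uW v a c unfolding colouring5_def by auto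
    qed
  qed
qed

lemma step_ext: "card {v \<in> insert x W. (c(x:=z)) v \<noteq> (c'(x:=z)) v} = card {v\<in>W. c v \<noteq> c' v}"
proof -
  have "{v \<in> insert x W. (c(x:=z)) v \<noteq> (c'(x:=z)) v} = {v\<in>W. c v \<noteq> c' v}" using xW by auto
  then show ?thesis by simp
qed

lemma step_x: "y \<noteq> z \<Longrightarrow> card {v \<in> insert x W. (c(x:=y)) v \<noteq> (c(x:=z)) v} = 1"
proof -
  assume "y \<noteq> z"
  then have "{v \<in> insert x W. (c(x:=y)) v \<noteq> (c(x:=z)) v} = {x}" by auto
  then show ?thesis by simp
qed

lemma used_bound: "vseq W E cs \<Longrightarrow> \<exists>A. finite A \<and> card A \<le> k \<and> used D k cs \<subseteq> hd cs ` D \<union> A"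
proof (induction cs arbitrary: k rule: induct_list012)
  case (2 c)
  then show ?case by (intro exI[of _ "{}"]) simp
next
  case (3 c c' zs)
  from "3.prems" have st: "card {v\<in>W. c v \<noteq> c' v} = 1" and vs': "vseq W E (c' # zs)" by simp_all
  from st obtain u0 where u0: "{v\<in>W. c v \<noteq> c' v} = {u0}" by (auto simp: card_1_singleton_iff)
  have sub: "c' ` D \<subseteq> c ` D \<union> {c' u0}"
  proof
    fix t assume "t \<in> c' ` D"
    then obtain u where u: "u \<in> D" "t = c' u" by auto
    show "t \<in> c ` D \<union> {c' u0}"
    proof (cases "u = u0")
      case False
      then have "c u = c' u" using u0 u DW by blast
      then have "t = c u" using u by simp
      then show ?thesis using u(1) by auto
    qed (use u in auto)
  qed
  show ?case
  proof (cases "Dmove D c c'")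
    case False
    then have "c' ` D = c ` D" unfolding Dmove_def by (auto intro: image_cong)
    moreover obtain A where "finite A" "card A \<le> k" "used D k (c' # zs) \<subseteq> hd (c' # zs) ` D \<union> A"
      using "3.IH"(2)[OF vs'] by blast
    ultimately show ?thesis using False by (intro exI[of _ A]) auto
  next
    case True
    show ?thesis
    proof (cases k)
      case 0
      then show ?thesis using True by (intro exI[of _ "{}"]) auto
    next
      case (Suc k')
      obtain A where A: "finite A" "card A \<le> k'" "used D k' (c' # zs) \<subseteq> hd (c' # zs) ` D \<union> A"
        using "3.IH"(2)[OF vs'] by blast
      have "card (insert (c' u0) A) \<le> k" using A Suc by (simp add: card_insert_if)
      moreover have "used D k (c # c' # zs) \<subseteq> hd (c # c' # zs) ` D \<union> insert (c' u0) A"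
        using A sub True Suc by (simp; blast)
      ultimately show ?thesis using A by (intro exI[of _ "insert (c' u0) A"]) auto
    qed
  qed
qed simp

lemma used_hd: "cs \<noteq> [] \<Longrightarrow> hd cs ` D \<subseteq> used D k cs"
proof -
  assume "cs \<noteq> []"
  then obtain c l where "cs = c # l" by (cases cs) auto
  then show ?thesis by (cases l) auto
qed

lemma used0: assumes v: "vseq W E cs" shows "used D 0 cs \<subseteq> hd cs ` D"
proof -
  obtain A where "finite A" "card A \<le> 0" "used D 0 cs \<subseteq> hd cs ` D \<union> A"
    using used_bound[OF v] by blast
  then show ?thesis by auto
qed

lemma vseq_ne: "vseq W' E' cs \<Longrightarrow> cs \<noteq> []"
  by (cases cs) auto

lemma ext_main:
  "vseq W E cs \<Longrightarrow> y \<in> {1..5} \<Longrightarrow> y \<notin> used D k cs \<Longrightarrow> k \<le> g \<Longrightarrow> bx \<notin> last cs ` D \<Longrightarrow>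
   \<exists>cs'. vseq (insert x W) E cs' \<and> hd cs' = (hd cs)(x:=y) \<and> last cs' = (last cs)(x:=bx) \<and>
     (\<forall>w\<in>W. times_recoloured cs' w = times_recoloured cs w) \<and>
     times_recoloured cs' x \<le> xb g (dm D cs) k"
proof (induction cs arbitrary: y k rule: induct_list012)
  case 1 then show ?case by simp
next
  case (2 c)
  have col: "colouring5 W E c" using 2 by simp
  have y: "y \<notin> c ` D" using 2 by simp
  have b: "bx \<notin> c ` D" using 2 by simp
  show ?case
  proof (cases "y = bx")
    case True
    then show ?thesis using col y "2.prems"
      by (intro exI[of _ "[c(x:=y)]"]) (simp add: col_ext tr_single xb_def)
  next
    case False
    have "\<forall>w\<in>W. times_recoloured [c(x:=y), c(x:=bx)] w = times_recoloured [c] w"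
      using xW by (auto simp: tr_cons tr_single)
    then show ?thesis using False col y b bx "2.prems"
      by (intro exI[of _ "[c(x:=y), c(x:=bx)]"]) (simp add: col_ext step_x tr_cons tr_single xb_def)
  qed
next
  case (3 c c' zs)
  from "3.prems" have col: "colouring5 W E c" and st: "card {v\<in>W. c v \<noteq> c' v} = 1"
    and vs': "vseq W E (c' # zs)" by simp_all
  have y: "y \<notin> c ` D" using "3.prems"(3) used_hd[of "c # c' # zs" k] by auto
  have b: "bx \<notin> last (c' # zs) ` D" using "3.prems" by simp
  show ?case
  proof (cases "Dmove D c c'")
    case False
    have "y \<notin> used D k (c' # zs)" using "3.prems"(3) False by simp
    from "3.IH"(2)[OF vs' "3.prems"(2) this "3.prems"(4) b] obtain cs'' where
      cs'': "vseq (insert x W) E cs''" "hd cs'' = c'(x:=y)" "last cs'' = (last (c' # zs))(x:=bx)"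
        "\<forall>w\<in>W. times_recoloured cs'' w = times_recoloured (c' # zs) w"
        "times_recoloured cs'' x \<le> xb g (dm D (c' # zs)) k" unfolding list.sel(1) by blast
    have ne: "cs'' \<noteq> []" using cs''(1) vseq_ne by blast
    then obtain h t where ht: "cs'' = h # t" by (cases cs'') auto
    have "vseq (insert x W) E (c(x:=y) # cs'')"
      using cs'' ht col_ext[OF col "3.prems"(2) y] step_ext[of c y c'] st by simp
    moreover have "\<forall>w\<in>W. times_recoloured (c(x:=y) # cs'') w = times_recoloured (c # c' # zs) w"
      using cs''(2,4) ne xW by (auto simp: tr_cons)
    moreover have "times_recoloured (c(x:=y) # cs'') x \<le> xb g (dm D (c # c' # zs)) k"
      using cs''(2,5) ne False by (simp add: tr_cons)
    ultimately show ?thesis using cs''(3) ne by (intro exI[of _ "c(x:=y) # cs''"]) simp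
  next
    case True
    show ?thesis
    proof (cases k)
      case (Suc k')
      have "y \<notin> used D k' (c' # zs)" using "3.prems"(3) True Suc by simp
      moreover have "k' \<le> g" using Suc "3.prems"(4) by simp
      ultimately obtain cs'' where
        cs'': "vseq (insert x W) E cs''" "hd cs'' = c'(x:=y)" "last cs'' = (last (c' # zs))(x:=bx)"
          "\<forall>w\<in>W. times_recoloured cs'' w = times_recoloured (c' # zs) w"
          "times_recoloured cs'' x \<le> xb g (dm D (c' # zs)) k'"
        using "3.IH"(2)[OF vs' "3.prems"(2) _ _ b] unfolding list.sel(1) by blast
      have ne: "cs'' \<noteq> []" using cs''(1) vseq_ne by blast
      then obtain h t where ht: "cs'' = h # t" by (cases cs'') auto
      have "vseq (insert x W) E (c(x:=y) # cs'')"
        using cs'' ht col_ext[OF col "3.prems"(2) y] step_ext[of c y c'] st by simp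
      moreover have "\<forall>w\<in>W. times_recoloured (c(x:=y) # cs'') w = times_recoloured (c # c' # zs) w"
        using cs''(2,4) ne xW by (auto simp: tr_cons)
      moreover have "times_recoloured (c(x:=y) # cs'') x \<le> xb g (dm D (c # c' # zs)) k"
        using cs''(2,5) ne True Suc xb_shift[of g "dm D (c' # zs)" k'] by (simp add: tr_cons)
      ultimately show ?thesis using cs''(3) ne by (intro exI[of _ "c(x:=y) # cs''"]) simp
    next
      case 0
      obtain A where A: "finite A" "card A \<le> g" "used D g (c # c' # zs) \<subseteq> c ` D \<union> A"
        using used_bound[OF "3.prems"(1), of g] by auto
      have "card (c ` D \<union> A) \<le> card (c ` D) + card A" by (rule card_Un_le)
      also have "\<dots> \<le> card D + g" using card_image_le[OF finD, of c] A by simp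
      finally have cA: "card (c ` D \<union> A) \<le> 4" using gD by simp
      have "\<not> {1..5::nat} \<subseteq> c ` D \<union> A"
      proof
        assume "{1..5::nat} \<subseteq> c ` D \<union> A"
        then have "card {1..5::nat} \<le> card (c ` D \<union> A)" using A finD by (intro card_mono) auto
        then show False using cA by simp
      qed
      then obtain z where z: "z \<in> {1..5}" "z \<notin> c ` D \<union> A" by blast
      have zu: "z \<notin> used D (g - 1) (c' # zs)" using A z True g1 by auto
      have zD: "z \<notin> c ` D" using z by auto
      obtain cs'' where
        cs'': "vseq (insert x W) E cs''" "hd cs'' = c'(x:=z)" "last cs'' = (last (c' # zs))(x:=bx)"
          "\<forall>w\<in>W. times_recoloured cs'' w = times_recoloured (c' # zs) w"
          "times_recoloured cs'' x \<le> xb g (dm D (c' # zs)) (g - 1)"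
        using "3.IH"(2)[OF vs' z(1) zu _ b] unfolding list.sel(1) by (meson diff_le_self)
      have ne: "cs'' \<noteq> []" using cs''(1) vseq_ne by blast
      then obtain h t where ht: "cs'' = h # t" by (cases cs'') auto
      have bnd: "xb g (dm D (c' # zs)) (g - 1) + 1 \<le> xb g (dm D (c # c' # zs)) k"
        using xb_step[OF g1, of "dm D (c' # zs)"] True 0 by simp
      show ?thesis
      proof (cases "y = z")
        case True
        have "vseq (insert x W) E (c(x:=y) # cs'')"
          using cs'' ht col_ext[OF col "3.prems"(2) y] step_ext[of c y c'] st True by simp
        moreover have "\<forall>w\<in>W. times_recoloured (c(x:=y) # cs'') w = times_recoloured (c # c' # zs) w"
          using cs''(2,4) ne xW True by (auto simp: tr_cons)
        moreover have "times_recoloured (c(x:=y) # cs'') x \<le> xb g (dm D (c # c' # zs)) k"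
          using cs''(2,5) ne True bnd by (simp add: tr_cons)
        ultimately show ?thesis using cs''(3) ne by (intro exI[of _ "c(x:=y) # cs''"]) simp
      next
        case False
        have "vseq (insert x W) E (c(x:=y) # c(x:=z) # cs'')"
          using cs'' ht col_ext[OF col "3.prems"(2) y] col_ext[OF col z(1) zD]
            step_ext[of c z c'] st step_x[OF False] by simp
        moreover have "\<forall>w\<in>W. times_recoloured (c(x:=y) # c(x:=z) # cs'') w = times_recoloured (c # c' # zs) w"
          using cs''(2,4) ne xW by (auto simp: tr_cons)
        moreover have "times_recoloured (c(x:=y) # c(x:=z) # cs'') x \<le> xb g (dm D (c # c' # zs)) k"
          using cs''(2,5) ne False bnd by (simp add: tr_cons)
        ultimately show ?thesis using cs''(3) ne by (intro exI[of _ "c(x:=y) # c(x:=z) # cs''"]) simp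
      qed
    qed
  qed
qed

lemma extend:
  assumes rs: "recolouring_seq W E cs a b" and ca: "colouring5 (insert x W) E a"
    and cb: "colouring5 (insert x W) E b" and bxb: "bx = b x"
  shows "\<exists>cs'. recolouring_seq (insert x W) E cs' a b \<and> (\<forall>w\<in>W. times_recoloured cs' w = times_recoloured cs w)
     \<and> times_recoloured cs' x \<le> xb g (\<Sum>u\<in>D. times_recoloured cs u) 0"
proof -
  from rs have v: "vseq W E cs" and ha: "agree_on W (hd cs) a" and lb: "agree_on W (last cs) b"
    by (auto simp: rs_iff)
  have ax: "a x \<in> {1..5}" using ca by (auto simp: colouring5_def)
  have "a x \<notin> hd cs ` D"
  proof
    assume "a x \<in> hd cs ` D"
    then obtain u where u: "u \<in> D" "a x = hd cs u" by auto
    then have "hd cs u = a u" using ha DW by (auto simp: agree_on_def)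
    moreover have "a x \<noteq> a u" using ca Dadj2[OF u(1)] DW u(1) by (auto simp: colouring5_def)
    ultimately show False using u by simp
  qed
  then have ay: "a x \<notin> used D 0 cs" using used0[OF v] by blast
  have bl: "bx \<notin> last cs ` D"
  proof
    assume "bx \<in> last cs ` D"
    then obtain u where u: "u \<in> D" "bx = last cs u" by auto
    then have "last cs u = b u" using lb DW by (auto simp: agree_on_def)
    moreover have "b x \<noteq> b u" using cb Dadj2[OF u(1)] DW u(1) by (auto simp: colouring5_def)
    ultimately show False using u bxb by simp
  qed
  obtain cs' where cs': "vseq (insert x W) E cs'" "hd cs' = (hd cs)(x:=a x)" "last cs' = (last cs)(x:=bx)"
     "\<forall>w\<in>W. times_recoloured cs' w = times_recoloured cs w" "times_recoloured cs' x \<le> xb g (dm D cs) 0"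
    using ext_main[OF v ax ay _ bl] by auto
  have "recolouring_seq (insert x W) E cs' a b"
    unfolding rs_iff using cs' ha lb bxb by (auto simp: agree_on_def)
  moreover have "times_recoloured cs' x \<le> xb g (\<Sum>u\<in>D. times_recoloured cs u) 0"
    using cs'(5) xb_mono[OF dm_le[OF finD, of cs], of g] by simp
  ultimately show ?thesis using cs'(4) by blast
qed

end



fun Bn :: "nat \<Rightarrow> nat" where
  "Bn 0 = 2049"
| "Bn (Suc j) = (6144 + Bn j) div 2 + 1"
lemma Bn_le6146: "Bn j \<le> 6146"
  by (induction j) auto
lemma Bn_mono_Suc: "Bn j \<le> Bn (Suc j)"
proof -
  have a: "Bn j \<le> 6146" by (rule Bn_le6146)
  have b: "6144 + Bn j = 2 * ((6144 + Bn j) div 2) + (6144 + Bn j) mod 2" by simp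
  have c: "(6144 + Bn j) mod 2 < 2" by simp
  from a b c have "Bn j \<le> (6144 + Bn j) div 2 + 1" by linarith
  then show ?thesis by simp
qed
lemma Bn_mono: "i \<le> j \<Longrightarrow> Bn i \<le> Bn j"
  by (rule lift_Suc_mono_le[of Bn]) (rule Bn_mono_Suc)

lemma Bn_ge: "2049 \<le> Bn j"
  using Bn_mono[of 0 j] by simp
lemma Bn11: "Bn 11 = 6143"
proof -
  have h0: "Bn 0 = 2049" by simp
  have h1: "Bn 1 = 4097" using Bn.simps(2)[of 0] h0 by (simp add: Suc_numeral)
  have e2: "(2::nat) = Suc 1" by simp
  have h2: "Bn 2 = 5121" unfolding e2 using Bn.simps(2)[of 1] h1 by simp
  have h3: "Bn 3 = 5633" using Bn.simps(2)[of 2] h2 by (simp add: Suc_numeral)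
  have h4: "Bn 4 = 5889" using Bn.simps(2)[of 3] h3 by (simp add: Suc_numeral)
  have h5: "Bn 5 = 6017" using Bn.simps(2)[of 4] h4 by (simp add: Suc_numeral)
  have h6: "Bn 6 = 6081" using Bn.simps(2)[of 5] h5 by (simp add: Suc_numeral)
  have h7: "Bn 7 = 6113" using Bn.simps(2)[of 6] h6 by (simp add: Suc_numeral)
  have h8: "Bn 8 = 6129" using Bn.simps(2)[of 7] h7 by (simp add: Suc_numeral)
  have h9: "Bn 9 = 6137" using Bn.simps(2)[of 8] h8 by (simp add: Suc_numeral)
  have h10: "Bn 10 = 6141" using Bn.simps(2)[of 9] h9 by (simp add: Suc_numeral)
  have h11: "Bn 11 = 6143" using Bn.simps(2)[of 10] h10 by (simp add: Suc_numeral)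
  show ?thesis using h11 by simp
qed

lemma Bn_le: "j < 12 \<Longrightarrow> Bn j \<le> 6143"
  using Bn_mono[of j 11] Bn11 by simp


lemma col_mono: "colouring5 V E c \<Longrightarrow> W \<subseteq> V \<Longrightarrow> colouring5 W E c"
  unfolding colouring5_def by blast

lemma distinct_nth_notin_take: assumes "distinct vs" "i < length vs" shows "vs ! i \<notin> set (take i vs)"
proof -
  have "distinct (take i vs @ vs ! i # drop (Suc i) vs)" using id_take_nth_drop[OF assms(2)] assms(1) by metis
  then show ?thesis by simp
qed


theorem lemma2:
  fixes V :: "'a set" and E :: "'a set set" and \<alpha> \<beta> :: "'a \<Rightarrow> nat"
  assumes "counterexample V E \<alpha> \<beta>"
    and "\<And>(V' :: 'a set) E' \<alpha>' \<beta>'. counterexample V' E' \<alpha>' \<beta>' \<Longrightarrow> card V \<le> card V'"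
  shows "\<not> (\<exists>S. S \<noteq> {} \<and> two_degenerate_one_island V E S \<and> card S \<le> 12)"
proof
  assume "\<exists>S. S \<noteq> {} \<and> two_degenerate_one_island V E S \<and> card S \<le> 12"
  then obtain S where S: "S \<noteq> {}" "two_degenerate_one_island V E S" "card S \<le> 12" by blast
  from S(2) obtain vs where SV: "S \<subseteq> V" and one: "\<forall>v\<in>S. card {u \<in> V - S. adj E v u} \<le> 1"
    and vsd: "distinct vs" and vsS: "set vs = S"
    and deg: "\<forall>i. 1 \<le> i \<and> i < length vs \<longrightarrow> card {u \<in> (V - S) \<union> set (take i vs). adj E (vs ! i) u} \<le> 2"
    unfolding two_degenerate_one_island_def by blast
  from assms(1) have gr: "graph V E" and pl: "planar V E" and gi: "girth_at_least 6 V E"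
    and ca: "colouring5 V E \<alpha>" and cb: "colouring5 V E \<beta>"
    and nocs: "\<not> (\<exists>cs. recolouring_seq V E cs \<alpha> \<beta> \<and> (\<forall>v\<in>V. times_recoloured cs v \<le> 6143))"
    unfolding counterexample_def by auto
  define V0 where "V0 = V - S"
  define E0 where "E0 = {e\<in>E. e \<subseteq> V0}"
  have finV: "finite V" using gr by (simp add: graph_def)
  have V0V: "V0 \<subseteq> V" unfolding V0_def by blast
  have "V0 \<subset> V" using S(1) SV unfolding V0_def by blast
  then have cardV0: "card V0 < card V" using finV by (rule psubset_card_mono[rotated])
  have adjE0: "\<And>u v. u \<in> V0 \<Longrightarrow> v \<in> V0 \<Longrightarrow> adj E0 u v \<longleftrightarrow> adj E u v"
    by (auto simp: adj_def E0_def)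
  have adjE0': "\<And>u v. adj E0 u v \<Longrightarrow> adj E u v" by (auto simp: adj_def E0_def)
  have col0: "\<And>c. colouring5 V0 E0 c \<longleftrightarrow> colouring5 V0 E c"
    unfolding colouring5_def using adjE0 by blast
  have g0: "graph V0 E0"
    unfolding graph_def
  proof (intro conjI ballI)
    show "finite V0" using finV V0V finite_subset by blast
  next
    fix e assume e: "e \<in> E0"
    then have "e \<in> E" "e \<subseteq> V0" by (auto simp: E0_def)
    then obtain u v where "e = {u, v}" "u \<noteq> v" using gr by (auto simp: graph_def)
    then show "\<exists>u v. e = {u, v} \<and> u \<in> V0 \<and> v \<in> V0 \<and> u \<noteq> v" using \<open>e \<subseteq> V0\<close> by auto
  qed
  have p0: "planar V0 E0"
  proof -
    from pl obtain p :: "'a \<Rightarrow> complex" and \<gamma> :: "'a set \<Rightarrow> real \<Rightarrow> complex" where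
      p1: "inj_on p V" and
      p2: "\<forall>e\<in>E. \<exists>u v. e = {u, v} \<and> arc (\<gamma> e) \<and> pathstart (\<gamma> e) = p u \<and>
                    pathfinish (\<gamma> e) = p v \<and> path_image (\<gamma> e) \<inter> p ` V = {p u, p v}" and
      p3: "\<forall>e\<in>E. \<forall>e'\<in>E. e \<noteq> e' \<longrightarrow> path_image (\<gamma> e) \<inter> path_image (\<gamma> e') \<subseteq> p ` (e \<inter> e')"
      unfolding planar_def by blast
    have q1: "inj_on p V0" using p1 V0V inj_on_subset by blast
    have q2: "\<forall>e\<in>E0. \<exists>u v. e = {u, v} \<and> arc (\<gamma> e) \<and> pathstart (\<gamma> e) = p u \<and>
                    pathfinish (\<gamma> e) = p v \<and> path_image (\<gamma> e) \<inter> p ` V0 = {p u, p v}"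
    proof
      fix e assume e: "e \<in> E0"
      then have eE: "e \<in> E" and eV0: "e \<subseteq> V0" by (auto simp: E0_def)
      from p2 eE obtain u v where uv: "e = {u, v}" "arc (\<gamma> e)" "pathstart (\<gamma> e) = p u"
        "pathfinish (\<gamma> e) = p v" "path_image (\<gamma> e) \<inter> p ` V = {p u, p v}" by blast
      have "u \<in> V0" "v \<in> V0" using uv(1) eV0 by auto
      then have "path_image (\<gamma> e) \<inter> p ` V0 = {p u, p v}" using uv(5) V0V by blast
      then show "\<exists>u v. e = {u, v} \<and> arc (\<gamma> e) \<and> pathstart (\<gamma> e) = p u \<and>
                    pathfinish (\<gamma> e) = p v \<and> path_image (\<gamma> e) \<inter> p ` V0 = {p u, p v}"
        using uv by blast
    qed
    have q3: "\<forall>e\<in>E0. \<forall>e'\<in>E0. e \<noteq> e' \<longrightarrow> path_image (\<gamma> e) \<inter> path_image (\<gamma> e') \<subseteq> p ` (e \<inter> e')"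
      using p3 by (auto simp: E0_def)
    show ?thesis unfolding planar_def using q1 q2 q3 by blast
  qed
  have gi0: "girth_at_least 6 V0 E0"
    unfolding girth_at_least_def
  proof (intro allI impI)
    fix cs assume "is_cycle V0 E0 cs"
    then have "is_cycle V E cs" using V0V adjE0' unfolding is_cycle_def by blast
    then show "6 \<le> length cs" using gi unfolding girth_at_least_def by blast
  qed
  have ca0: "colouring5 V0 E0 \<alpha>" "colouring5 V0 E0 \<beta>"
    using col_mono[OF ca V0V] col_mono[OF cb V0V] col0 by auto
  have "\<not> counterexample V0 E0 \<alpha> \<beta>" using assms(2)[of V0 E0 \<alpha> \<beta>] cardV0 by linarith
  then obtain cs0 where cs0: "recolouring_seq V0 E0 cs0 \<alpha> \<beta>" "\<forall>v\<in>V0. times_recoloured cs0 v \<le> 6143"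
    using g0 p0 gi0 ca0 unfolding counterexample_def by blast
  have cs0': "recolouring_seq V0 E cs0 \<alpha> \<beta>"
    using cs0(1) col0 unfolding recolouring_seq_def by simp
  have lenvs: "length vs \<le> 12" using S(3) vsS distinct_card[OF vsd] by simp
  have iter: "\<And>i. i \<le> length vs \<Longrightarrow> \<exists>cs. recolouring_seq (V0 \<union> set (take i vs)) E cs \<alpha> \<beta> \<and>
      (\<forall>w\<in>V0. times_recoloured cs w \<le> 6143) \<and> (\<forall>j<i. times_recoloured cs (vs ! j) \<le> Bn j)"
  proof -
    fix i show "i \<le> length vs \<Longrightarrow> \<exists>cs. recolouring_seq (V0 \<union> set (take i vs)) E cs \<alpha> \<beta> \<and>
      (\<forall>w\<in>V0. times_recoloured cs w \<le> 6143) \<and> (\<forall>j<i. times_recoloured cs (vs ! j) \<le> Bn j)"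
    proof (induction i)
      case 0
      then show ?case using cs0' cs0(2) by auto
    next
      case (Suc i)
      then have i: "i < length vs" by simp
      then obtain cs where cs: "recolouring_seq (V0 \<union> set (take i vs)) E cs \<alpha> \<beta>"
        "\<forall>w\<in>V0. times_recoloured cs w \<le> 6143" "\<forall>j<i. times_recoloured cs (vs ! j) \<le> Bn j"
        using Suc.IH by auto
      define x where "x = vs ! i"
      define W where "W = V0 \<union> set (take i vs)"
      define D where "D = {u\<in>W. adj E x u}"
      have xS: "x \<in> S" unfolding x_def using nth_mem[OF i] vsS by simp
      have xt: "x \<notin> set (take i vs)" using distinct_nth_notin_take[OF vsd i] unfolding x_def .
      have xW: "x \<notin> W" unfolding W_def V0_def using xS xt by blast
      have WV: "W \<subseteq> V" unfolding W_def using V0V SV vsS set_take_subset[of i vs] by blast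
      have finW: "finite W" using WV finV finite_subset by blast
      have DW: "D \<subseteq> W" unfolding D_def by blast
      have finD: "finite D" using DW finW finite_subset by blast
      have noloop: "\<not> adj E x x"
      proof
        assume "adj E x x"
        then have "{x, x} \<in> E" by (simp add: adj_def)
        then obtain u v where "{x, x} = {u, v}" "u \<noteq> v" using gr unfolding graph_def by blast
        then show False by (metis doubleton_eq_iff)
      qed
      have takeS: "set (take (Suc i) vs) = insert x (set (take i vs))"
        using i x_def by (simp add: take_Suc_conv_app_nth)
      have WS: "V0 \<union> set (take (Suc i) vs) = insert x W" using takeS W_def by auto
      have DV0: "D \<inter> V0 \<subseteq> {u \<in> V - S. adj E x u}" unfolding D_def V0_def by blast
      have finN: "finite {u \<in> V - S. adj E x u}" using finV by simp
      have c1: "card {u \<in> V - S. adj E x u} \<le> 1" using one xS by blast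
      have cDV0: "card (D \<inter> V0) \<le> 1"
        using card_mono[OF finN DV0] c1 by linarith
      have cD: "card D \<le> 2"
      proof (cases i)
        case 0
        then have "D = D \<inter> V0" unfolding D_def W_def by auto
        then show ?thesis using cDV0 by simp
      next
        case (Suc i')
        have "D = {u \<in> (V - S) \<union> set (take i vs). adj E (vs ! i) u}" unfolding D_def W_def V0_def x_def ..
        moreover have "card {u \<in> (V - S) \<union> set (take i vs). adj E (vs ! i) u} \<le> 2" using deg i Suc by simp
        ultimately show ?thesis by simp
      qed
      have cD0: "i = 0 \<Longrightarrow> card D \<le> 1"
      proof -
        assume "i = 0"
        then have "D = D \<inter> V0" unfolding D_def W_def by auto
        then show ?thesis using cDV0 by simp
      qed
      have inH: "\<And>u. u \<in> W \<Longrightarrow> u \<notin> V0 \<Longrightarrow> \<exists>j<i. u = vs ! j"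
      proof -
        fix u assume "u \<in> W" "u \<notin> V0"
        then have "u \<in> set (take i vs)" unfolding W_def by auto
        then obtain j where "j < length (take i vs)" "u = take i vs ! j" by (auto simp: in_set_conv_nth)
        then show "\<exists>j<i. u = vs ! j" by auto
      qed
      have allb: "\<And>u. u \<in> W \<Longrightarrow> times_recoloured cs u \<le> 6143"
      proof -
        fix u assume u: "u \<in> W"
        show "times_recoloured cs u \<le> 6143"
        proof (cases "u \<in> V0")
          case True then show ?thesis using cs(2) by auto
        next
          case False
          then obtain j where "j < i" "u = vs ! j" using inH u by blast
          then show ?thesis using cs(3) Bn_le[of j] i lenvs by fastforce
        qed
      qed
      have Hb: "\<And>u. u \<in> W \<Longrightarrow> u \<notin> V0 \<Longrightarrow> i \<noteq> 0 \<and> times_recoloured cs u \<le> Bn (i - 1)"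
      proof -
        fix u assume u: "u \<in> W" "u \<notin> V0"
        then obtain j where j: "j < i" "u = vs ! j" using inH by blast
        then have "Bn j \<le> Bn (i - 1)" by (intro Bn_mono) simp
        then show "i \<noteq> 0 \<and> times_recoloured cs u \<le> Bn (i - 1)" using cs(3) j by fastforce
      qed
      define g where "g = 4 - card D"
      have g1: "1 \<le> g" and gD: "card D + g \<le> 4" using cD unfolding g_def by auto
      have bx: "\<beta> x \<in> {1..5}" using cb xS SV by (auto simp: colouring5_def)
      have Dadj: "\<And>u. u \<in> W \<Longrightarrow> adj E x u \<Longrightarrow> u \<in> D" unfolding D_def by blast
      have Dadj2: "\<And>u. u \<in> D \<Longrightarrow> adj E x u" unfolding D_def by blast
      have ixV: "insert x W \<subseteq> V" using WV xS SV by blast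
      have csW: "recolouring_seq W E cs \<alpha> \<beta>" using cs(1) unfolding W_def .
      from extend[OF xW DW finD Dadj Dadj2 noloop g1 gD bx csW col_mono[OF ca ixV] col_mono[OF cb ixV] refl]
      obtain cs' where cs': "recolouring_seq (insert x W) E cs' \<alpha> \<beta>"
        "\<forall>w\<in>W. times_recoloured cs' w = times_recoloured cs w"
        "times_recoloured cs' x \<le> xb g (\<Sum>u\<in>D. times_recoloured cs u) 0"
        by blast
      have xbound: "xb g (\<Sum>u\<in>D. times_recoloured cs u) 0 \<le> Bn i"
      proof -
        consider "card D = 0" | "card D = 1" | "card D = 2" using cD by linarith
        then show ?thesis
        proof cases
          case 1
          then have "D = {}" using finD by simp
          then show ?thesis using Bn_ge[of i] by (simp add: xb_def)
        next
          case 2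
          then obtain u where u: "D = {u}" by (auto simp: card_1_singleton_iff)
          then have "times_recoloured cs u \<le> 6143" using allb DW by auto
          then have "xb g (\<Sum>u\<in>D. times_recoloured cs u) 0 \<le> xb g 6143 0" using u xb_mono by simp
          also have "\<dots> = 2049" using 2 unfolding g_def xb_def by simp
          finally show ?thesis using Bn_ge[of i] by simp
        next
          case 3
          then obtain u1 u2 where u: "D = {u1, u2}" "u1 \<noteq> u2" by (auto simp: card_2_iff)
          have "\<not> (u1 \<in> V0 \<and> u2 \<in> V0)"
          proof
            assume "u1 \<in> V0 \<and> u2 \<in> V0"
            then have "D \<inter> V0 = {u1, u2}" using u by auto
            then show False using cDV0 u(2) by simp
          qed
          then have "\<exists>a b. {a, b} = {u1, u2} \<and> b \<notin> V0" by blast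
          then obtain a b where ab: "{a, b} = {u1, u2}" "b \<notin> V0" by blast
          have ab2: "a \<noteq> b" using ab(1) u(2) by auto
          have aW: "a \<in> W" "b \<in> W" using ab(1) u(1) DW by auto
          have ta: "times_recoloured cs a \<le> 6143" using allb aW by simp
          have tb: "i \<noteq> 0 \<and> times_recoloured cs b \<le> Bn (i - 1)" using Hb aW ab by simp
          then obtain i' where i': "i = Suc i'" by (cases i) auto
          have "(\<Sum>u\<in>D. times_recoloured cs u) = times_recoloured cs a + times_recoloured cs b"
          proof -
            have "D = {a, b}" using u(1) ab(1) by simp
            then show ?thesis using ab2 by simp
          qed
          also have "\<dots> \<le> 6143 + Bn i'" using ta tb i' by simp
          finally have "xb g (\<Sum>u\<in>D. times_recoloured cs u) 0 \<le> xb g (6143 + Bn i') 0" by (rule xb_mono)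
          also have "\<dots> = (6144 + Bn i') div 2 + 1" using 3 unfolding g_def xb_def by simp
          also have "\<dots> = Bn i" using i' by simp
          finally show ?thesis .
        qed
      qed
      show ?case
      proof (intro exI conjI)
        show "recolouring_seq (V0 \<union> set (take (Suc i) vs)) E cs' \<alpha> \<beta>" using cs'(1) WS by simp
        show "\<forall>w\<in>V0. times_recoloured cs' w \<le> 6143" using cs'(2) cs(2) W_def by auto
        show "\<forall>j<Suc i. times_recoloured cs' (vs ! j) \<le> Bn j"
        proof (intro allI impI)
          fix j assume "j < Suc i"
          then consider "j < i" | "j = i" by linarith
          then show "times_recoloured cs' (vs ! j) \<le> Bn j"
          proof cases
            case 1
            then have "vs ! j \<in> W" unfolding W_def using i by (auto simp: in_set_conv_nth intro!: exI[of _ j])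
            then show ?thesis using cs'(2) cs(3) 1 by auto
          next
            case 2
            then show ?thesis using cs'(3) xbound x_def by simp
          qed
        qed
      qed
    qed
  qed
  obtain cs where cs: "recolouring_seq (V0 \<union> set vs) E cs \<alpha> \<beta>"
      "\<forall>w\<in>V0. times_recoloured cs w \<le> 6143" "\<forall>j<length vs. times_recoloured cs (vs ! j) \<le> Bn j"
    using iter[of "length vs"] by auto
  have VV: "V0 \<union> set vs = V" using vsS SV V0_def by auto
  have "\<forall>v\<in>V. times_recoloured cs v \<le> 6143"
  proof
    fix v assume v: "v \<in> V"
    show "times_recoloured cs v \<le> 6143"
    proof (cases "v \<in> V0")
      case True then show ?thesis using cs(2) by auto
    next
      case False
      then have "v \<in> set vs" using v VV by auto
      then obtain j where "j < length vs" "v = vs ! j" by (auto simp: in_set_conv_nth)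
      then show ?thesis using cs(3) Bn_le[of j] lenvs by fastforce
    qed
  qed
  then show False using nocs cs(1) VV by auto
qed

end
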